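(* Let $k\in\mathbb{Z}$. For all positive integers $x,n$, $$(-1)^{x-1}E_{n-1}^{(k)}(x)+E_{n-1}^{(k)}=\frac{2}{n}\sum_{m=1}^{n}\sum_{j=1}^{m}\sum_{i=0}^{x-1}(-1)^{i}i^{n-m}\binom{n}{m}\frac{S_{1}(m,j)}{j^{k-1}}.$$
   Context: Convention: $0^0=1$. For $k\in\mathbb{Z}$, $\mathrm{Ei}_k(x)=\sum_{n=1}^{\infty}\frac{x^n}{n^k(n-1)!}$. The poly-Genocchi polynomials $G_n^{(k)}(x)$ are defined by $\frac{2\,\mathrm{Ei}_k(\log(1+t))}{e^t+1}e^{xt}=\sum_{n=0}^{\infty}G_n^{(k)}(x)\frac{t^n}{n!}$; the poly-Euler polynomials are $E_n^{(k)}(x)=\frac{G_{n+1}^{(k)}(x)}{n+1}$ ($n\ge0$), and $E_n^{(k)}=E_n^{(k)}(0)$. $S_1(n,m)$ are the signed Stirling numbers of the first kind: $\frac{(\log(1+t))^m}{m!}=\sum_{n=m}^{\infty}S_1(n,m)\frac{t^n}{n!}$. *)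

theory Defs
  imports Complex_Main "HOL-Computational_Algebra.Formal_Power_Series"
begin

definition Ei_fps :: "int \<Rightarrow> real fps" where
  "Ei_fps k = Abs_fps (\<lambda>n. if n = 0 then 0 else 1 / (real n powi k * fact (n - 1)))"

text \<open>Generating function 2 Ei_k(log(1+t)) / (e^t + 1) * e^(x t).
  fps_ln 1 is the series of log(1+t).\<close>
definition polyGenocchi_gf :: "int \<Rightarrow> real \<Rightarrow> real fps" where
  "polyGenocchi_gf k x =
     fps_const 2 * fps_compose (Ei_fps k) (fps_ln 1) * inverse (fps_exp 1 + 1) * fps_exp x"

definition polyGenocchi :: "nat \<Rightarrow> int \<Rightarrow> real \<Rightarrow> real" where
  "polyGenocchi n k x = fact n * fps_nth (polyGenocchi_gf k x) n"

definition polyEuler :: "nat \<Rightarrow> int \<Rightarrow> real \<Rightarrow> real" where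
  "polyEuler n k x = polyGenocchi (n + 1) k x / real (n + 1)"

text \<open>Signed Stirling numbers of the first kind: (log(1+t))^m / m! = sum S1(n,m) t^n/n!.\<close>
definition stirling1s :: "nat \<Rightarrow> nat \<Rightarrow> real" where
  "stirling1s n m = fact n * fps_nth (fps_ln 1 ^ m) n / fact m"

end

theory Submission
  imports Defs
begin

lemma telesc:
  fixes x :: nat
  assumes "x > 0"
  shows "(\<Sum>i<x. fps_const ((-1) ^ i) * fps_exp (real i)) * (fps_exp 1 + 1)
         = fps_const ((-1) ^ (x - 1)) * fps_exp (real x) + 1"
  using assms
proof (induction x)
  case 0 then show ?case by simp
next
  case (Suc x)
  show ?case
  proof (cases "x = 0")
    case True then show ?thesis by (simp add: fps_exp_add_mult)
  next
    case False
    then obtain y where y: "x = Suc y" by (cases x) auto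
    have e: "fps_exp (real (Suc x)) = fps_exp (real x) * fps_exp 1"
      by (simp add: fps_exp_add_mult[symmetric] add.commute)
    have "(\<Sum>i<Suc x. fps_const ((-1) ^ i) * fps_exp (real i)) * (fps_exp 1 + 1)
       = (\<Sum>i<x. fps_const ((-1) ^ i) * fps_exp (real i)) * (fps_exp 1 + 1)
         + fps_const ((-1) ^ x) * fps_exp (real x) * (fps_exp 1 + 1)"
      by (simp add: distrib_right)
    also have "\<dots> = fps_const ((-1) ^ (x - 1)) * fps_exp (real x) + 1
         + fps_const ((-1) ^ x) * fps_exp (real x) * (fps_exp 1 + 1)"
      using Suc.IH False by simp
    also have "\<dots> = fps_const ((-1) ^ x) * fps_exp (real (Suc x)) + 1"
    proof -
      have c: "fps_const ((-1::real) ^ (x - 1)) = - fps_const ((-1) ^ x)"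
        using y by (simp flip: fps_const_neg)
      show ?thesis unfolding c e by (simp add: algebra_simps distrib_left[symmetric])
    qed
    finally show ?thesis by simp
  qed
qed

theorem corollary5:
  fixes k :: int and x n :: nat
  assumes "x > 0" and "n > 0"
  shows "(-1) ^ (x - 1) * polyEuler (n - 1) k (real x) + polyEuler (n - 1) k 0 =
    2 / real n * (\<Sum>m = 1..n. \<Sum>j = 1..m. \<Sum>i = 0..x - 1.
       (-1) ^ i * real i ^ (n - m) * real (n choose m) * stirling1s m j / (real j powi (k - 1)))"
proof -
  define C where "C = fps_compose (Ei_fps k) (fps_ln 1)"
  define E :: "real fps" where "E = fps_exp 1 + 1"
  define S where "S = (\<Sum>i<x. fps_const ((-1) ^ i) * fps_exp (real i))"
  have E0: "fps_nth E 0 \<noteq> 0" by (simp add: E_def)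
  have key: "fps_const ((-1) ^ (x - 1)) * polyGenocchi_gf k (real x) + polyGenocchi_gf k 0
      = fps_const 2 * C * S"
  proof -
    have "fps_const ((-1) ^ (x - 1)) * polyGenocchi_gf k (real x) + polyGenocchi_gf k 0
       = fps_const 2 * C * inverse E * (fps_const ((-1) ^ (x - 1)) * fps_exp (real x) + 1)"
      by (simp add: polyGenocchi_gf_def C_def E_def algebra_simps)
    also have "\<dots> = fps_const 2 * C * (inverse E * E) * S"
    proof -
      have t: "fps_const ((-1) ^ (x - 1)) * fps_exp (real x) + 1 = E * S"
        using telesc[OF assms(1)] by (simp add: S_def E_def mult.commute)
      show ?thesis unfolding t by (simp add: mult.assoc)
    qed
    also have "\<dots> = fps_const 2 * C * S" using inverse_mult_eq_1[OF E0] by simp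
    finally show ?thesis .
  qed
  have lhs: "(-1) ^ (x - 1) * polyEuler (n - 1) k (real x) + polyEuler (n - 1) k 0
     = fact n / real n * fps_nth (fps_const 2 * C * S) n"
  proof -
    have h: "fps_nth (fps_const 2 * C * S) n
      = (-1) ^ (x - 1) * fps_nth (polyGenocchi_gf k (real x)) n + fps_nth (polyGenocchi_gf k 0) n"
      by (simp only: key[symmetric]) simp
    have nn: "n - 1 + 1 = n" using assms(2) by simp
    show ?thesis unfolding polyEuler_def polyGenocchi_def nn h
      using assms(2) by (simp add: field_simps)
  qed
  have Cm: "fps_nth C m = (\<Sum>j = 1..m. stirling1s m j / fact m / (real j powi (k - 1)))" for m
  proof -
    have "fps_nth C m = (\<Sum>j = 0..m. fps_nth (Ei_fps k) j * fps_nth (fps_ln 1 ^ j) m)"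
      by (simp add: C_def fps_compose_nth)
    also have "\<dots> = (\<Sum>j = 1..m. fps_nth (Ei_fps k) j * fps_nth (fps_ln 1 ^ j) m)"
      by (subst sum.atLeast_Suc_atMost) (auto simp: Ei_fps_def)
    also have "\<dots> = (\<Sum>j = 1..m. stirling1s m j / fact m / (real j powi (k - 1)))"
    proof (rule sum.cong)
      fix j assume "j \<in> {1..m}"
      then have j: "j \<ge> 1" by simp
      have pk: "real j powi k = real j powi (k - 1) * real j"
        using power_int_add_1[of "real j" "k - 1"] j by simp
      have fj: "fact j = real j * fact (j - 1)"
        using fact_reduce[of j] j by simp
      show "fps_nth (Ei_fps k) j * fps_nth (fps_ln 1 ^ j) m = stirling1s m j / fact m / (real j powi (k - 1))"
        using j by (simp add: Ei_fps_def stirling1s_def pk fj field_simps)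
    qed simp
    finally show ?thesis .
  qed
  have Sm: "fps_nth S r = (\<Sum>i = 0..x - 1. (-1) ^ i * real i ^ r) / fact r" for r
  proof -
    have "{0..x-1} = {..<x}" using assms(1) by auto
    then show ?thesis by (simp add: S_def fps_sum_nth sum_divide_distrib)
  qed
  have "fact n / real n * fps_nth (fps_const 2 * C * S) n
      = 2 / real n * (\<Sum>m = 0..n. fact n * fps_nth C m * fps_nth S (n - m))"
  proof -
    have "fps_nth (fps_const 2 * C * S) n = 2 * fps_nth (C * S) n"
      by (simp add: mult.assoc)
    then show ?thesis by (simp only: fps_mult_nth sum_distrib_left) (simp add: algebra_simps)
  qed
  also have "\<dots> = 2 / real n * (\<Sum>m = 1..n. fact n * fps_nth C m * fps_nth S (n - m))"
    by (subst sum.atLeast_Suc_atMost) (auto simp: Cm)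
  also have "\<dots> = 2 / real n * (\<Sum>m = 1..n. \<Sum>j = 1..m. \<Sum>i = 0..x - 1.
       (-1) ^ i * real i ^ (n - m) * real (n choose m) * stirling1s m j / (real j powi (k - 1)))"
  proof -
    have "fact n * fps_nth C m * fps_nth S (n - m) = (\<Sum>j = 1..m. \<Sum>i = 0..x - 1.
       (-1) ^ i * real i ^ (n - m) * real (n choose m) * stirling1s m j / (real j powi (k - 1)))"
      if "m \<in> {1..n}" for m
    proof -
      have b: "real (n choose m) = fact n / (fact m * fact (n - m))"
        using that by (simp add: binomial_fact)
      define A where "A = (\<Sum>j = 1..m. stirling1s m j / (real j powi (k - 1)))"
      define B where "B = (\<Sum>i = 0..x - 1. (-1) ^ i * real i ^ (n - m) :: real)"
      have Cm': "fps_nth C m = A / fact m"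
        unfolding Cm A_def sum_divide_distrib by (rule sum.cong) auto
      have L: "fact n * fps_nth C m * fps_nth S (n - m) = real (n choose m) * (A * B)"
        unfolding Cm' Sm B_def[symmetric] b by (simp add: field_simps)
      have R: "(\<Sum>j = 1..m. \<Sum>i = 0..x - 1.
         (-1) ^ i * real i ^ (n - m) * real (n choose m) * stirling1s m j / (real j powi (k - 1)))
         = real (n choose m) * (A * B)"
      proof -
        have "real (n choose m) * (A * B) = (\<Sum>j = 1..m. \<Sum>i = 0..x - 1.
          real (n choose m) * (stirling1s m j / (real j powi (k - 1)) * ((-1) ^ i * real i ^ (n - m))))"
          unfolding A_def B_def sum_product by (simp add: sum_distrib_left)
        also have "\<dots> = (\<Sum>j = 1..m. \<Sum>i = 0..x - 1.
         (-1) ^ i * real i ^ (n - m) * real (n choose m) * stirling1s m j / (real j powi (k - 1)))"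
          by (intro sum.cong refl) (simp add: algebra_simps)
        finally show ?thesis by simp
      qed
      show ?thesis using L R by simp
    qed
    then show ?thesis by simp
  qed
  finally show ?thesis using lhs by simp
qed

end
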